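(* Let $\mathcal{X}$ be a finite-dimensional Hilbert space, $\sigma\in\mathcal{D}(\mathcal{X})$, $\Phi$ a quantum channel on $\mathcal{L}(\mathcal{X})$ with Kraus operators $\{A_i\}_i$, $H$ a Hermitian operator on $\mathcal{X}$, $\epsilon\in\mathbb{R}$, $U_\epsilon=\exp(-i\epsilon H)$, and $\Psi(\rho)=U_\epsilon\Phi(\rho)U_\epsilon^\dagger$. Then $$G_{\mathrm{ch}}(\Phi,\Psi;\sigma)=1+\sum_{i,j}\left|\operatorname{Tr}(\sigma A_i^\dagger U_\epsilon A_j)\right|^2-\sum_{i,j}\left|\operatorname{Tr}(\sigma A_i^\dagger A_j)\right|^2.$$
   Context: $\mathcal{D}(\mathcal{X})$ is the set of density operators on $\mathcal{X}$. Superfidelity: $G(\rho_1,\rho_2)=\operatorname{Tr}(\rho_1\rho_2)+\sqrt{1-\operatorname{Tr}\rho_1^2}\sqrt{1-\operatorname{Tr}\rho_2^2}$. Channel superfidelity: $G_{\mathrm{ch}}(\Phi,\Psi;\sigma)=\inf G\big((\Phi\otimes\mathbb{1}_{\mathcal{L}(\mathcal{Z})})(\xi),(\Psi\otimes\mathbb{1}_{\mathcal{L}(\mathcal{Z})})(\xi)\big)$ over all finite-dimensional $\mathcal{Z}$ and all pure states $\xi$ on $\mathcal{X}\otimes\mathcal{Z}$ with $\operatorname{Tr}_{\mathcal{Z}}\xi=\sigma$. *)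

theory Defs
  imports "HOL-Analysis.Analysis" "Jordan_Normal_Form.Matrix"
begin

definition adj :: "complex mat \<Rightarrow> complex mat" where
  "adj A = mat (dim_col A) (dim_row A) (\<lambda>(i,j). cnj (A $$ (j,i)))"

definition mtrace :: "complex mat \<Rightarrow> complex" where
  "mtrace A = (\<Sum>i<dim_row A. A $$ (i,i))"

definition hermitian :: "nat \<Rightarrow> complex mat \<Rightarrow> bool" where
  "hermitian n A \<longleftrightarrow> A \<in> carrier_mat n n \<and> adj A = A"

definition psd :: "nat \<Rightarrow> complex mat \<Rightarrow> bool" where
  "psd n A \<longleftrightarrow> hermitian n A \<and>
     (\<forall>v. v \<in> carrier_vec n \<longrightarrow> 0 \<le> Re (\<Sum>i<n. \<Sum>j<n. cnj (v $ i) * A $$ (i,j) * v $ j))"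

definition density :: "nat \<Rightarrow> complex mat \<Rightarrow> bool" where
  "density n \<rho> \<longleftrightarrow> psd n \<rho> \<and> mtrace \<rho> = 1"

definition pure_state :: "nat \<Rightarrow> complex mat \<Rightarrow> bool" where
  "pure_state d \<xi> \<longleftrightarrow> (\<exists>v. v \<in> carrier_vec d \<and> (\<Sum>i<d. (cmod (v $ i))\<^sup>2) = 1 \<and>
       \<xi> = mat d d (\<lambda>(i,j). v $ i * cnj (v $ j)))"

text \<open>Identification X (x) Z with C^(n*m): basis vector e_i (x) f_k has index i*m+k.\<close>
definition ptrace_Z :: "nat \<Rightarrow> nat \<Rightarrow> complex mat \<Rightarrow> complex mat" where
  "ptrace_Z n m \<rho> = mat n n (\<lambda>(i,j). \<Sum>k<m. \<rho> $$ (i*m+k, j*m+k))"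

text \<open>(Phi (x) id_{L(Z)})(xi) for a (linear) map Phi on n x n matrices, defined blockwise:
  ((Phi (x) id)(xi))_{(i,k),(j,l)} = Phi(xi_{k,l})_{i,j}, where (xi_{k,l})_{i,j} = xi_{(i,k),(j,l)}.\<close>
definition tensor_id :: "nat \<Rightarrow> nat \<Rightarrow> (complex mat \<Rightarrow> complex mat) \<Rightarrow> complex mat \<Rightarrow> complex mat" where
  "tensor_id n m \<Phi> \<xi> = mat (n*m) (n*m) (\<lambda>(p,q).
      \<Phi> (mat n n (\<lambda>(i,j). \<xi> $$ (i*m + p mod m, j*m + q mod m))) $$ (p div m, q div m))"

definition kraus_apply :: "complex mat list \<Rightarrow> complex mat \<Rightarrow> complex mat" where
  "kraus_apply As \<rho> = mat (dim_row \<rho>) (dim_col \<rho>)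
      (\<lambda>(i,j). \<Sum>k<length As. (As!k * \<rho> * adj (As!k)) $$ (i,j))"

definition kraus_channel :: "nat \<Rightarrow> complex mat list \<Rightarrow> bool" where
  "kraus_channel n As \<longleftrightarrow> (\<forall>A\<in>set As. A \<in> carrier_mat n n) \<and>
     mat n n (\<lambda>(i,j). \<Sum>k<length As. (adj (As!k) * As!k) $$ (i,j)) = 1\<^sub>m n"

definition superfidelity :: "complex mat \<Rightarrow> complex mat \<Rightarrow> real" where
  "superfidelity \<rho>1 \<rho>2 = Re (mtrace (\<rho>1 * \<rho>2))
     + sqrt (1 - Re (mtrace (\<rho>1 * \<rho>1))) * sqrt (1 - Re (mtrace (\<rho>2 * \<rho>2)))"

definition channel_superfidelity ::
  "nat \<Rightarrow> (complex mat \<Rightarrow> complex mat) \<Rightarrow> (complex mat \<Rightarrow> complex mat) \<Rightarrow> complex mat \<Rightarrow> real" where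
  "channel_superfidelity n \<Phi> \<Psi> \<sigma> = Inf {superfidelity (tensor_id n m \<Phi> \<xi>) (tensor_id n m \<Psi> \<xi>) | m \<xi>.
       0 < m \<and> pure_state (n*m) \<xi> \<and> ptrace_Z n m \<xi> = \<sigma>}"

definition mat_exp :: "complex mat \<Rightarrow> complex mat" where
  "mat_exp A = mat (dim_row A) (dim_col A) (\<lambda>(i,j). \<Sum>k. (A ^\<^sub>m k) $$ (i,j) / of_nat (fact k))"

end

theory Submission
  imports Defs
begin


lemma mult_entry:
  assumes "A \<in> carrier_mat n k" "B \<in> carrier_mat k m" "i < n" "j < m"
  shows "(A*B) $$ (i,j) = (\<Sum>l<k. A $$ (i,l) * B $$ (l,j))"
  using assms by (auto simp: scalar_prod_def lessThan_atLeast0 intro!: sum.cong)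

lemma pow_add_mat: assumes H: "H \<in> carrier_mat n n"
  shows "H ^\<^sub>m a * H ^\<^sub>m b = H ^\<^sub>m (a+b)"
proof (induct b)
  case 0 then show ?case using H by simp
next
  case (Suc b)
  have "H ^\<^sub>m a * H ^\<^sub>m Suc b = H ^\<^sub>m a * (H ^\<^sub>m b * H)" by simp
  also have "\<dots> = (H ^\<^sub>m a * H ^\<^sub>m b) * H"
    using H by (simp add: assoc_mult_mat[of _ n n _ n _ n])
  finally show ?case using Suc by simp
qed

definition msum :: "nat \<Rightarrow> complex mat \<Rightarrow> real" where
  "msum n H = (\<Sum>i<n. \<Sum>j<n. cmod (H$$(i,j)))"

lemma pow_entry_bound: assumes H: "H \<in> carrier_mat n n" and "i < n" "j < n"
  shows "cmod ((H ^\<^sub>m k) $$ (i,j)) \<le> msum n H ^ k"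
  using assms(2,3)
proof (induct k arbitrary: i j)
  case 0 then show ?case using H by auto
next
  case (Suc k)
  have "(H ^\<^sub>m Suc k) $$ (i,j) = (\<Sum>l<n. (H ^\<^sub>m k) $$ (i,l) * H $$ (l,j))"
    using H Suc by (subst pow_mat.simps(2), subst mult_entry[of _ n n _ n]) auto
  hence "cmod ((H ^\<^sub>m Suc k) $$ (i,j)) \<le> (\<Sum>l<n. cmod ((H ^\<^sub>m k) $$ (i,l)) * cmod (H $$ (l,j)))"
    by (metis (no_types, lifting) norm_mult norm_sum sum.cong)
  also have "\<dots> \<le> (\<Sum>l<n. msum n H ^ k * cmod (H $$ (l,j)))"
    by (intro sum_mono mult_right_mono Suc) auto
  also have "\<dots> = msum n H ^ k * (\<Sum>l<n. cmod (H $$ (l,j)))" by (simp add: sum_distrib_left)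
  also have "(\<Sum>l<n. cmod (H $$ (l,j))) \<le> msum n H"
    unfolding msum_def by (intro sum_mono member_le_sum) (use Suc in auto)
  hence "msum n H ^ k * (\<Sum>l<n. cmod (H $$ (l,j))) \<le> msum n H ^ k * msum n H"
    by (intro mult_left_mono zero_le_power) (auto simp: msum_def intro!: sum_nonneg)
  finally show ?case by (simp add: mult.commute)
qed

definition Fexp :: "nat \<Rightarrow> complex mat \<Rightarrow> complex \<Rightarrow> complex mat" where
  "Fexp n H c = mat n n (\<lambda>(i,j). \<Sum>k. c^k * (H ^\<^sub>m k) $$ (i,j) / fact k)"

lemma Fexp_summable: fixes c :: complex assumes H: "H \<in> carrier_mat n n" and "i < n" "j < n"
  shows "summable (\<lambda>k. norm (c^k * (H ^\<^sub>m k) $$ (i,j) / fact k))"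
proof (rule summable_comparison_test)
  show "summable (\<lambda>k. (cmod c * msum n H)^k /\<^sub>R fact k)"
    using exp_converges summable_def by blast
  show "\<exists>N. \<forall>k\<ge>N. norm (norm (c^k * (H ^\<^sub>m k) $$ (i,j) / fact k)) \<le> (cmod c * msum n H)^k /\<^sub>R fact k"
  proof (intro exI allI impI)
    fix k :: nat
    have "norm (norm (c^k * (H ^\<^sub>m k) $$ (i,j) / fact k)) = cmod c ^ k * cmod ((H ^\<^sub>m k) $$ (i,j)) / fact k"
      by (simp add: norm_mult norm_divide norm_power)
    also have "\<dots> \<le> cmod c ^ k * msum n H ^ k / fact k"
      by (intro divide_right_mono mult_left_mono pow_entry_bound[OF assms]) auto
    finally show "norm (norm (c^k * (H ^\<^sub>m k) $$ (i,j) / fact k)) \<le> (cmod c * msum n H)^k /\<^sub>R fact k"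
      by (simp add: power_mult_distrib divide_inverse mult_ac)
  qed
qed

lemma Fexp_mult: assumes H: "H \<in> carrier_mat n n"
  shows "Fexp n H c * Fexp n H d = Fexp n H (c + d)"
proof (rule eq_matI)
  fix i l assume i: "i < dim_row (Fexp n H (c + d))" and l: "l < dim_col (Fexp n H (c + d))"
  hence i: "i < n" and l: "l < n" by (auto simp: Fexp_def)
  define a where "a = (\<lambda>j k. c^k * (H ^\<^sub>m k) $$ (i,j) / fact k)"
  define b where "b = (\<lambda>j k. d^k * (H ^\<^sub>m k) $$ (j,l) / fact k)"
  have sa: "summable (\<lambda>k. norm (a j k))" if "j < n" for j
    unfolding a_def using Fexp_summable[OF H i that] .
  have sb: "summable (\<lambda>k. norm (b j k))" if "j < n" for j
    unfolding b_def using Fexp_summable[OF H that l] .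
  have "(Fexp n H c * Fexp n H d) $$ (i,l) = (\<Sum>j<n. (\<Sum>k. a j k) * (\<Sum>k. b j k))"
    using i l by (subst mult_entry[of _ n n _ n]) (auto simp: Fexp_def a_def b_def)
  also have "\<dots> = (\<Sum>j<n. \<Sum>p. \<Sum>k\<le>p. a j k * b j (p - k))"
    by (intro sum.cong refl Cauchy_product sa sb) auto
  also have "\<dots> = (\<Sum>p. \<Sum>j<n. \<Sum>k\<le>p. a j k * b j (p - k))"
    by (rule suminf_sum[symmetric]) (intro summable_Cauchy_product sa sb, auto)
  also have "\<dots> = (\<Sum>p. (c+d)^p * (H ^\<^sub>m p) $$ (i,l) / fact p)"
  proof (rule arg_cong[where f=suminf], rule ext)
    fix p
    have "(\<Sum>j<n. \<Sum>k\<le>p. a j k * b j (p - k))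
       = (\<Sum>k\<le>p. c^k * d^(p-k) / (fact k * fact (p-k)) * (\<Sum>j<n. (H ^\<^sub>m k) $$ (i,j) * (H ^\<^sub>m (p-k)) $$ (j,l)))"
      unfolding a_def b_def by (subst sum.swap) (auto simp: sum_distrib_left intro!: sum.cong)
    also have "\<dots> = (\<Sum>k\<le>p. c^k * d^(p-k) / (fact k * fact (p-k)) * (H ^\<^sub>m p) $$ (i,l))"
    proof (intro sum.cong refl)
      fix k assume "k \<in> {..p}"
      hence "(\<Sum>j<n. (H ^\<^sub>m k) $$ (i,j) * (H ^\<^sub>m (p-k)) $$ (j,l)) = (H ^\<^sub>m k * H ^\<^sub>m (p-k)) $$ (i,l)"
        using H i l by (subst mult_entry[of _ n n _ n]) auto
      also have "\<dots> = (H ^\<^sub>m p) $$ (i,l)" using \<open>k \<in> {..p}\<close> by (simp add: pow_add_mat[OF H])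
      finally show "c^k * d^(p-k) / (fact k * fact (p-k)) * (\<Sum>j<n. (H ^\<^sub>m k) $$ (i,j) * (H ^\<^sub>m (p-k)) $$ (j,l))
          = c^k * d^(p-k) / (fact k * fact (p-k)) * (H ^\<^sub>m p) $$ (i,l)" by simp
    qed
    also have "\<dots> = (\<Sum>k\<le>p. of_nat (p choose k) * c^k * d^(p-k)) * (H ^\<^sub>m p) $$ (i,l) / fact p"
      by (auto simp: sum_distrib_right sum_divide_distrib binomial_fact intro!: sum.cong)
    also have "\<dots> = (c+d)^p * (H ^\<^sub>m p) $$ (i,l) / fact p"
      by (simp add: binomial_ring)
    finally show "(\<Sum>j<n. \<Sum>k\<le>p. a j k * b j (p - k)) = (c+d)^p * (H ^\<^sub>m p) $$ (i,l) / fact p" .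
  qed
  also have "\<dots> = Fexp n H (c + d) $$ (i,l)" using i l by (simp add: Fexp_def)
  finally show "(Fexp n H c * Fexp n H d) $$ (i,l) = Fexp n H (c + d) $$ (i,l)" .
qed (auto simp: Fexp_def)

lemma Fexp_zero: assumes H: "H \<in> carrier_mat n n"
  shows "Fexp n H 0 = 1\<^sub>m n"
proof (rule eq_matI)
  fix i j assume "i < dim_row (1\<^sub>m n)" "j < dim_col (1\<^sub>m n)"
  hence ij: "i < n" "j < n" by auto
  have "(\<Sum>k. (0::complex)^k * (H ^\<^sub>m k) $$ (i,j) / fact k) = (\<Sum>k. if k = 0 then (H ^\<^sub>m 0) $$ (i,j) else 0)"
    by (intro arg_cong[where f=suminf] ext) auto
  also have "\<dots> = (H ^\<^sub>m 0) $$ (i,j)"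
    using sums_single[of 0 "\<lambda>_. (H ^\<^sub>m 0) $$ (i,j)"] sums_unique by (metis (no_types, lifting) sums_cong)
  finally show "Fexp n H 0 $$ (i,j) = 1\<^sub>m n $$ (i,j)" using ij H by (simp add: Fexp_def)
qed (auto simp: Fexp_def)

lemma suminf_cnj': assumes "summable f" shows "cnj (suminf f) = (\<Sum>k. cnj (f k))"
proof -
  have "f sums suminf f" using assms by (simp add: summable_sums)
  then have "(\<lambda>k. cnj (f k)) sums cnj (suminf f)" by (simp add: sums_cnj)
  then show ?thesis by (simp add: sums_unique)
qed

lemma smult_pow_entry: fixes c :: complex assumes H: "H \<in> carrier_mat n n" and "i < n" "j < n"
  shows "((c \<cdot>\<^sub>m H) ^\<^sub>m k) $$ (i,j) = c^k * (H ^\<^sub>m k) $$ (i,j)"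
  using assms(2,3)
proof (induct k arbitrary: i j)
  case 0 then show ?case using H by auto
next
  case (Suc k)
  have cH: "c \<cdot>\<^sub>m H \<in> carrier_mat n n" using H by auto
  have "((c \<cdot>\<^sub>m H) ^\<^sub>m Suc k) $$ (i,j) = (\<Sum>l<n. ((c \<cdot>\<^sub>m H) ^\<^sub>m k) $$ (i,l) * (c \<cdot>\<^sub>m H) $$ (l,j))"
    using cH Suc by (subst pow_mat.simps(2), subst mult_entry[of _ n n _ n]) auto
  also have "\<dots> = (\<Sum>l<n. c^Suc k * ((H ^\<^sub>m k) $$ (i,l) * H $$ (l,j)))"
    using Suc H by (intro sum.cong) (auto simp: mult.assoc mult.commute mult.left_commute)
  also have "\<dots> = c^Suc k * (\<Sum>l<n. (H ^\<^sub>m k) $$ (i,l) * H $$ (l,j))"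
    by (simp add: sum_distrib_left)
  also have "(\<Sum>l<n. (H ^\<^sub>m k) $$ (i,l) * H $$ (l,j)) = (H ^\<^sub>m Suc k) $$ (i,j)"
    using H Suc by (subst pow_mat.simps(2), subst mult_entry[of _ n n _ n]) auto
  finally show ?case .
qed

lemma herm_entry: assumes "hermitian n H" "i < n" "j < n"
  shows "cnj (H $$ (j,i)) = H $$ (i,j)"
proof -
  have H: "H \<in> carrier_mat n n" and a: "adj H = H" using assms unfolding hermitian_def by auto
  have "adj H $$ (i,j) = cnj (H $$ (j,i))" using H assms by (simp add: adj_def)
  then show ?thesis using a by simp
qed

lemma herm_pow_entry: assumes h: "hermitian n H" and "i < n" "j < n"
  shows "cnj ((H ^\<^sub>m k) $$ (j,i)) = (H ^\<^sub>m k) $$ (i,j)"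
  using assms(2,3)
proof (induct k arbitrary: i j)
  case 0 then show ?case using h by (auto simp: hermitian_def)
next
  case (Suc k)
  have H: "H \<in> carrier_mat n n" using h by (simp add: hermitian_def)
  have "cnj ((H ^\<^sub>m Suc k) $$ (j,i)) = cnj (\<Sum>l<n. (H ^\<^sub>m k) $$ (j,l) * H $$ (l,i))"
    using H Suc by (subst pow_mat.simps(2), subst mult_entry[of _ n n _ n]) auto
  also have "\<dots> = (\<Sum>l<n. H $$ (i,l) * (H ^\<^sub>m k) $$ (l,j))"
    using Suc h by (auto simp: herm_entry mult.commute intro!: sum.cong)
  also have "\<dots> = (H * H ^\<^sub>m k) $$ (i,j)"
    using H Suc by (subst mult_entry[of _ n n _ n]) auto
  also have "H * H ^\<^sub>m k = H ^\<^sub>m Suc k"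
    using pow_add_mat[OF H, of 1 k] H by simp
  finally show ?case .
qed

lemma mat_exp_Fexp: assumes H: "H \<in> carrier_mat n n"
  shows "mat_exp (c \<cdot>\<^sub>m H) = Fexp n H c"
proof (rule eq_matI)
  fix i j assume "i < dim_row (Fexp n H c)" "j < dim_col (Fexp n H c)"
  hence ij: "i < n" "j < n" by (auto simp: Fexp_def)
  have d: "dim_row (c \<cdot>\<^sub>m H) = n" "dim_col (c \<cdot>\<^sub>m H) = n" using H by auto
  show "mat_exp (c \<cdot>\<^sub>m H) $$ (i,j) = Fexp n H c $$ (i,j)"
    unfolding mat_exp_def Fexp_def d using ij by (simp add: smult_pow_entry[OF H])
qed (use H in \<open>auto simp: mat_exp_def Fexp_def\<close>)

lemma adj_Fexp: assumes h: "hermitian n H"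
  shows "adj (Fexp n H c) = Fexp n H (cnj c)"
proof -
  have H: "H \<in> carrier_mat n n" using h by (simp add: hermitian_def)
  have fd: "dim_row (Fexp n H d) = n" "dim_col (Fexp n H d) = n" for d by (simp_all add: Fexp_def)
  have fe: "Fexp n H d $$ (i,j) = (\<Sum>k. d^k * (H ^\<^sub>m k) $$ (i,j) / fact k)" if "i < n" "j < n" for d i j
    using that unfolding Fexp_def by simp
  show ?thesis
  proof (rule eq_matI)
    fix i j assume "i < dim_row (Fexp n H (cnj c))" "j < dim_col (Fexp n H (cnj c))"
    hence ij: "i < n" "j < n" by (simp_all only: fd)
    have sm: "summable (\<lambda>k. c^k * (H ^\<^sub>m k) $$ (j,i) / fact k)"
      by (rule summable_norm_cancel[OF Fexp_summable[OF H ij(2) ij(1)]])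
    have "adj (Fexp n H c) $$ (i,j) = cnj (Fexp n H c $$ (j,i))"
      unfolding adj_def fd using ij by simp
    also have "\<dots> = cnj (\<Sum>k. c^k * (H ^\<^sub>m k) $$ (j,i) / fact k)" by (simp only: fe[OF ij(2) ij(1)])
    also have "\<dots> = (\<Sum>k. cnj (c^k * (H ^\<^sub>m k) $$ (j,i) / fact k))" by (rule suminf_cnj'[OF sm])
    also have "\<dots> = (\<Sum>k. cnj c^k * (H ^\<^sub>m k) $$ (i,j) / fact k)"
    proof (rule arg_cong[where f=suminf], rule ext)
      fix k
      have "cnj ((H ^\<^sub>m k) $$ (j,i)) = (H ^\<^sub>m k) $$ (i,j)" by (rule herm_pow_entry[OF h ij])
      then show "cnj (c^k * (H ^\<^sub>m k) $$ (j,i) / fact k) = cnj c^k * (H ^\<^sub>m k) $$ (i,j) / fact k"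
        by (simp only: complex_cnj_divide complex_cnj_mult complex_cnj_power complex_cnj_fact)
    qed
    also have "\<dots> = Fexp n H (cnj c) $$ (i,j)" by (simp only: fe[OF ij])
    finally show "adj (Fexp n H c) $$ (i,j) = Fexp n H (cnj c) $$ (i,j)" .
  next
    show "dim_row (adj (Fexp n H c)) = dim_row (Fexp n H (cnj c))" unfolding adj_def fd by simp
    show "dim_col (adj (Fexp n H c)) = dim_col (Fexp n H (cnj c))" unfolding adj_def fd by simp
  qed
qed

lemma unitary_U: fixes \<epsilon> :: real assumes h: "hermitian n H"
  defines "U \<equiv> mat_exp ((- (\<i> * complex_of_real \<epsilon>)) \<cdot>\<^sub>m H)"
  shows "adj U * U = 1\<^sub>m n" "U * adj U = 1\<^sub>m n" "U \<in> carrier_mat n n" "adj U \<in> carrier_mat n n"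
proof -
  have H: "H \<in> carrier_mat n n" using h by (simp add: hermitian_def)
  have U: "U = Fexp n H (- (\<i> * complex_of_real \<epsilon>))" unfolding U_def by (rule mat_exp_Fexp[OF H])
  have aU: "adj U = Fexp n H (\<i> * complex_of_real \<epsilon>)" unfolding U adj_Fexp[OF h] by simp
  show "adj U * U = 1\<^sub>m n" by (simp only: aU) (simp add: U Fexp_mult[OF H] Fexp_zero[OF H])
  show "U * adj U = 1\<^sub>m n" by (simp only: aU) (simp add: U Fexp_mult[OF H] Fexp_zero[OF H])
  show "U \<in> carrier_mat n n" by (simp add: U Fexp_def)
  show "adj U \<in> carrier_mat n n" by (simp only: aU) (simp add: Fexp_def)
qed



lemma mult_entry':
  assumes "A \<in> carrier_mat n k" "B \<in> carrier_mat k m" "i < n" "j < m"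
  shows "(A*B) $$ (i,j) = (\<Sum>l<k. A $$ (i,l) * B $$ (l,j))"
  using assms by (auto simp: scalar_prod_def lessThan_atLeast0 intro!: sum.cong)

definition ip :: "nat \<Rightarrow> (nat \<Rightarrow> complex) \<Rightarrow> (nat \<Rightarrow> complex) \<Rightarrow> complex" where
  "ip N x y = (\<Sum>p<N. cnj (x p) * y p)"

definition lift :: "nat \<Rightarrow> nat \<Rightarrow> complex mat \<Rightarrow> (nat \<Rightarrow> complex) \<Rightarrow> (nat \<Rightarrow> complex)" where
  "lift n m M v = (\<lambda>p. \<Sum>a<n. M $$ (p div m, a) * v (a*m + p mod m))"

lemma sum_lessThan_add: fixes a b :: nat shows "(\<Sum>p<a+b. f p) = (\<Sum>p<a. f p) + (\<Sum>k<b. f (a+k))"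
  by (induct b) (auto simp: add.assoc)

lemma sum_split_nm: fixes n m :: nat shows "(\<Sum>p<n*m. f p) = (\<Sum>i<n. \<Sum>k<m. f (i*m+k))"
proof (induct n)
  case 0 then show ?case by simp
next
  case (Suc n)
  have "(\<Sum>p<Suc n*m. f p) = (\<Sum>p<n*m + m. f p)" by (simp add: add.commute)
  also have "\<dots> = (\<Sum>p<n*m. f p) + (\<Sum>k<m. f (n*m+k))"
    by (rule sum_lessThan_add)
  finally show ?case using Suc by simp
qed

lemma ip_cong: "(\<And>p. p < N \<Longrightarrow> x p = x' p) \<Longrightarrow> (\<And>p. p < N \<Longrightarrow> y p = y' p) \<Longrightarrow> ip N x y = ip N x' y'"
  unfolding ip_def by auto

lemma lift_lift: assumes M: "M \<in> carrier_mat n n" and N: "N \<in> carrier_mat n n" and p: "p < n*m"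
  shows "lift n m M (lift n m N v) p = lift n m (M*N) v p"
proof -
  have m: "0 < m" using p by (cases m) auto
  have i: "p div m < n" using p by (simp add: less_mult_imp_div_less)
  have k: "p mod m < m" using m by simp
  have "lift n m M (lift n m N v) p = (\<Sum>b<n. M $$ (p div m, b) * (\<Sum>a<n. N $$ (b, a) * v (a*m + p mod m)))"
    using k by (simp add: lift_def)
  also have "\<dots> = (\<Sum>b<n. \<Sum>a<n. M $$ (p div m, b) * N $$ (b, a) * v (a*m + p mod m))"
    by (simp add: sum_distrib_left mult.assoc)
  also have "\<dots> = (\<Sum>a<n. \<Sum>b<n. M $$ (p div m, b) * N $$ (b, a) * v (a*m + p mod m))"
    by (rule sum.swap)
  also have "\<dots> = (\<Sum>a<n. (\<Sum>b<n. M $$ (p div m, b) * N $$ (b, a)) * v (a*m + p mod m))"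
    by (simp add: sum_distrib_right)
  also have "\<dots> = lift n m (M*N) v p"
    unfolding lift_def using i M N by (intro sum.cong refl) (subst mult_entry'[of _ n n _ n], auto)
  finally show ?thesis .
qed

lemma lift_one: assumes p: "p < n*m" shows "lift n m (1\<^sub>m n) v p = v p"
proof -
  have m: "0 < m" using p by (cases m) auto
  have i: "p div m < n" using p by (simp add: less_mult_imp_div_less)
  have "lift n m (1\<^sub>m n) v p = (\<Sum>a<n. (if p div m = a then v (a*m + p mod m) else 0))"
    unfolding lift_def using i by (intro sum.cong) auto
  also have "\<dots> = v (p div m * m + p mod m)" using i by (simp add: sum.delta)
  finally show ?thesis by simp
qed

lemma ip_lift_adj: assumes M: "M \<in> carrier_mat n n"
  shows "ip (n*m) (lift n m M x) y = ip (n*m) x (lift n m (adj M) y)"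
proof -
  have "ip (n*m) (lift n m M x) y = (\<Sum>i<n. \<Sum>k<m. \<Sum>a<n. cnj (M $$ (i,a)) * cnj (x (a*m+k)) * y (i*m+k))"
    unfolding ip_def lift_def
    by (subst sum_split_nm) (simp add: sum_distrib_right mult.assoc)
  also have "\<dots> = (\<Sum>k<m. \<Sum>i<n. \<Sum>a<n. cnj (M $$ (i,a)) * cnj (x (a*m+k)) * y (i*m+k))"
    by (rule sum.swap)
  also have "\<dots> = (\<Sum>k<m. \<Sum>a<n. \<Sum>i<n. cnj (M $$ (i,a)) * cnj (x (a*m+k)) * y (i*m+k))"
    by (rule sum.cong[OF refl], rule sum.swap)
  also have "\<dots> = (\<Sum>a<n. \<Sum>k<m. \<Sum>i<n. cnj (M $$ (i,a)) * cnj (x (a*m+k)) * y (i*m+k))"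
    by (rule sum.swap)
  also have "\<dots> = ip (n*m) x (lift n m (adj M) y)"
    unfolding ip_def lift_def using M
    by (subst sum_split_nm) (auto simp: sum_distrib_left adj_def mult_ac intro!: sum.cong)
  finally show ?thesis .
qed


lemma idx_bound: fixes a k n m :: nat assumes "a < n" "k < m" shows "a*m + k < n*m"
proof -
  have "a*m + k < Suc a * m" using assms by simp
  also have "Suc a * m \<le> n * m" using assms by (intro mult_le_mono1) simp
  finally show ?thesis .
qed

lemma ip_lift_trace:
  assumes M: "M \<in> carrier_mat n n"
  shows "ip (n*m) v (lift n m M v) = mtrace (ptrace_Z n m (mat (n*m) (n*m) (\<lambda>(i,j). v i * cnj (v j))) * M)"
proof -
  let ?s = "ptrace_Z n m (mat (n*m) (n*m) (\<lambda>(i,j). v i * cnj (v j)))"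
  have s: "?s \<in> carrier_mat n n" by (simp add: ptrace_Z_def)
  have "mtrace (?s * M) = (\<Sum>a<n. \<Sum>i<n. ?s $$ (a,i) * M $$ (i,a))"
    unfolding mtrace_def
  proof (rule sum.cong)
    show "{..<dim_row (?s*M)} = {..<n}" using s by simp
    fix a assume "a \<in> {..<n}" thus "(?s*M)$$(a,a) = (\<Sum>i<n. ?s $$ (a,i) * M $$ (i,a))"
      using s M by (subst mult_entry'[of _ n n _ n]) auto
  qed
  also have "\<dots> = (\<Sum>a<n. \<Sum>i<n. \<Sum>k<m. v (a*m+k) * cnj (v (i*m+k)) * M $$ (i,a))"
    by (intro sum.cong refl) (simp add: ptrace_Z_def idx_bound sum_distrib_right)
  also have "\<dots> = (\<Sum>i<n. \<Sum>a<n. \<Sum>k<m. v (a*m+k) * cnj (v (i*m+k)) * M $$ (i,a))"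
    by (rule sum.swap)
  also have "\<dots> = (\<Sum>i<n. \<Sum>k<m. \<Sum>a<n. v (a*m+k) * cnj (v (i*m+k)) * M $$ (i,a))"
    by (rule sum.cong[OF refl], rule sum.swap)
  also have "\<dots> = ip (n*m) v (lift n m M v)"
    unfolding ip_def lift_def
    by (subst sum_split_nm) (auto simp: sum_distrib_left mult_ac intro!: sum.cong)
  finally show ?thesis by simp
qed

lemma ip_linear_sum: "ip N x (\<lambda>p. \<Sum>t\<in>T. f t p) = (\<Sum>t\<in>T. ip N x (f t))"
  unfolding ip_def by (simp add: sum_distrib_left sum.swap[of _ T])

lemma kraus_sum_ip:
  assumes K: "kraus_channel n As"
  shows "(\<Sum>t<length As. ip (n*m) (lift n m (As!t) v) (lift n m (As!t) v)) = ip (n*m) v v"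
proof -
  have A: "As!t \<in> carrier_mat n n" if "t < length As" for t using K that by (auto simp: kraus_channel_def)
  have aA: "adj (As!t) \<in> carrier_mat n n" if "t < length As" for t using A[OF that] by (auto simp: adj_def)
  have "(\<Sum>t<length As. ip (n*m) (lift n m (As!t) v) (lift n m (As!t) v))
      = (\<Sum>t<length As. ip (n*m) v (lift n m (adj (As!t) * As!t) v))"
  proof (intro sum.cong refl)
    fix t assume "t \<in> {..<length As}"
    hence t: "t < length As" by simp
    have "ip (n*m) (lift n m (As!t) v) (lift n m (As!t) v) = ip (n*m) v (lift n m (adj (As!t)) (lift n m (As!t) v))"
      by (rule ip_lift_adj[OF A[OF t]])
    also have "\<dots> = ip (n*m) v (lift n m (adj (As!t) * As!t) v)"
      by (rule ip_cong) (auto intro: lift_lift[OF aA[OF t] A[OF t]])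
    finally show "ip (n*m) (lift n m (As!t) v) (lift n m (As!t) v) = ip (n*m) v (lift n m (adj (As!t) * As!t) v)" .
  qed
  also have "\<dots> = ip (n*m) v (\<lambda>p. \<Sum>t<length As. lift n m (adj (As!t) * As!t) v p)"
    by (rule ip_linear_sum[symmetric])
  also have "\<dots> = ip (n*m) v v"
  proof (rule ip_cong)
    fix p assume p: "p < n*m"
    have m: "0 < m" using p by (cases m) auto
    have i: "p div m < n" using p by (simp add: less_mult_imp_div_less)
    have "(\<Sum>t<length As. lift n m (adj (As!t) * As!t) v p)
        = lift n m (mat n n (\<lambda>(i,j). \<Sum>k<length As. (adj (As!k) * As!k) $$ (i,j))) v p"
      unfolding lift_def using i by (simp add: sum_distrib_right sum.swap[of _ "{..<length As}"])
    also have "\<dots> = lift n m (1\<^sub>m n) v p" using K by (simp add: kraus_channel_def)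
    also have "\<dots> = v p" by (rule lift_one[OF p])
    finally show "(\<Sum>t<length As. lift n m (adj (As!t) * As!t) v p) = v p" .
  qed simp
  finally show ?thesis .
qed

lemma ip_cnj: "cnj (ip N x y) = ip N y x"
  unfolding ip_def by (simp add: mult.commute)

lemma ip_self: "Re (ip N x x) = (\<Sum>p<N. (cmod (x p))\<^sup>2)"
proof -
  have e: "\<And>p. cnj (x p) * x p = complex_of_real ((cmod (x p))\<^sup>2)"
    by (metis complex_norm_square mult.commute)
  have "ip N x x = (\<Sum>p<N. complex_of_real ((cmod (x p))\<^sup>2))"
    unfolding ip_def e ..
  then show ?thesis by (simp add: Re_sum)
qed

lemma ip_CS: "(cmod (ip N x y))\<^sup>2 \<le> Re (ip N x x) * Re (ip N y y)"
proof -
  have "cmod (ip N x y) \<le> (\<Sum>p<N. cmod (x p) * cmod (y p))"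
    unfolding ip_def by (rule order_trans[OF norm_sum]) (simp add: norm_mult)
  hence "(cmod (ip N x y))\<^sup>2 \<le> (\<Sum>p<N. cmod (x p) * cmod (y p))\<^sup>2"
    by (intro power_mono) auto
  also have "\<dots> \<le> (\<Sum>p<N. (cmod (x p))\<^sup>2) * (\<Sum>p<N. (cmod (y p))\<^sup>2)"
    by (rule Cauchy_Schwarz_ineq_sum)
  finally show ?thesis by (simp add: ip_self)
qed


lemma conj_entry:
  assumes M: "M \<in> carrier_mat n n" and K: "K \<in> carrier_mat n n" and T: "finite T"
    and Ke: "\<And>b c. b < n \<Longrightarrow> c < n \<Longrightarrow> K $$ (b,c) = (\<Sum>t\<in>T. f t b * cnj (g t c))"
    and i: "i < n" and j: "j < n"
  shows "(M * K * adj M) $$ (i,j) = (\<Sum>t\<in>T. (\<Sum>b<n. M $$ (i,b) * f t b) * cnj (\<Sum>c<n. M $$ (j,c) * g t c))"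
proof -
  have aM: "adj M \<in> carrier_mat n n" using M by (auto simp: adj_def)
  have MK: "M * K \<in> carrier_mat n n" using M K by auto
  have "(M * K * adj M) $$ (i,j) = (\<Sum>c<n. (M*K) $$ (i,c) * adj M $$ (c,j))"
    using MK aM i j by (subst mult_entry'[of _ n n _ n]) auto
  also have "\<dots> = (\<Sum>c<n. (\<Sum>b<n. M $$ (i,b) * K $$ (b,c)) * cnj (M $$ (j,c)))"
    using M K i j by (intro sum.cong refl) (subst mult_entry'[of _ n n _ n], auto simp: adj_def)
  also have "\<dots> = (\<Sum>c<n. \<Sum>b<n. \<Sum>t\<in>T. M $$ (i,b) * f t b * (cnj (g t c) * cnj (M $$ (j,c))))"
    using Ke by (simp add: sum_distrib_left sum_distrib_right mult.assoc)
  also have "\<dots> = (\<Sum>c<n. \<Sum>t\<in>T. \<Sum>b<n. M $$ (i,b) * f t b * (cnj (g t c) * cnj (M $$ (j,c))))"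
    by (rule sum.cong[OF refl], rule sum.swap)
  also have "\<dots> = (\<Sum>t\<in>T. \<Sum>c<n. \<Sum>b<n. M $$ (i,b) * f t b * (cnj (g t c) * cnj (M $$ (j,c))))"
    by (rule sum.swap)
  also have "\<dots> = (\<Sum>t\<in>T. \<Sum>b<n. \<Sum>c<n. M $$ (i,b) * f t b * (cnj (g t c) * cnj (M $$ (j,c))))"
    by (rule sum.cong[OF refl], rule sum.swap)
  also have "\<dots> = (\<Sum>t\<in>T. (\<Sum>b<n. M $$ (i,b) * f t b) * (\<Sum>c<n. cnj (g t c) * cnj (M $$ (j,c))))"
    by (simp only: sum_product)
  also have "\<dots> = (\<Sum>t\<in>T. (\<Sum>b<n. M $$ (i,b) * f t b) * cnj (\<Sum>c<n. M $$ (j,c) * g t c))"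
    by (simp add: mult.commute)
  finally show ?thesis .
qed

lemma trace_rank_sums:
  assumes r: "\<rho> \<in> carrier_mat N N" and r': "\<rho>' \<in> carrier_mat N N"
    and e: "\<And>p q. p < N \<Longrightarrow> q < N \<Longrightarrow> \<rho> $$ (p,q) = (\<Sum>t<L. X t p * cnj (X t q))"
    and e': "\<And>p q. p < N \<Longrightarrow> q < N \<Longrightarrow> \<rho>' $$ (p,q) = (\<Sum>s<L. Y s p * cnj (Y s q))"
  shows "mtrace (\<rho> * \<rho>') = (\<Sum>t<L. \<Sum>s<L. complex_of_real ((cmod (ip N (X t) (Y s)))\<^sup>2))"
proof -
  define F where "F p q t s = X t p * cnj (X t q) * (Y s q * cnj (Y s p))" for p q t s
  have "mtrace (\<rho> * \<rho>') = (\<Sum>p<N. \<Sum>q<N. \<rho> $$ (p,q) * \<rho>' $$ (q,p))"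
    unfolding mtrace_def
  proof (rule sum.cong)
    show "{..<dim_row (\<rho>*\<rho>')} = {..<N}" using r by simp
    fix p assume "p \<in> {..<N}" thus "(\<rho>*\<rho>')$$(p,p) = (\<Sum>q<N. \<rho> $$ (p,q) * \<rho>' $$ (q,p))"
      using r r' by (subst mult_entry'[of _ N N _ N]) auto
  qed
  also have "\<dots> = (\<Sum>p<N. \<Sum>q<N. \<Sum>t<L. \<Sum>s<L. F p q t s)"
    using e e' by (simp add: F_def sum_product)
  also have "\<dots> = (\<Sum>p<N. \<Sum>t<L. \<Sum>q<N. \<Sum>s<L. F p q t s)"
    by (rule sum.cong[OF refl], rule sum.swap)
  also have "\<dots> = (\<Sum>t<L. \<Sum>p<N. \<Sum>q<N. \<Sum>s<L. F p q t s)"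
    by (rule sum.swap)
  also have "\<dots> = (\<Sum>t<L. \<Sum>p<N. \<Sum>s<L. \<Sum>q<N. F p q t s)"
    by (rule sum.cong[OF refl], rule sum.cong[OF refl], rule sum.swap)
  also have "\<dots> = (\<Sum>t<L. \<Sum>s<L. \<Sum>p<N. \<Sum>q<N. F p q t s)"
    by (rule sum.cong[OF refl], rule sum.swap)
  also have "\<dots> = (\<Sum>t<L. \<Sum>s<L. ip N (X t) (Y s) * cnj (ip N (X t) (Y s)))"
  proof (intro sum.cong refl)
    fix t s
    have "ip N (X t) (Y s) * cnj (ip N (X t) (Y s)) = (\<Sum>q<N. cnj (X t q) * Y s q) * (\<Sum>p<N. X t p * cnj (Y s p))"
      unfolding ip_def by simp
    also have "\<dots> = (\<Sum>q<N. \<Sum>p<N. cnj (X t q) * Y s q * (X t p * cnj (Y s p)))"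
      by (simp only: sum_product)
    also have "\<dots> = (\<Sum>p<N. \<Sum>q<N. cnj (X t q) * Y s q * (X t p * cnj (Y s p)))"
      by (rule sum.swap)
    also have "\<dots> = (\<Sum>p<N. \<Sum>q<N. F p q t s)"
      unfolding F_def by (simp add: mult_ac)
    finally show "(\<Sum>p<N. \<Sum>q<N. F p q t s) = ip N (X t) (Y s) * cnj (ip N (X t) (Y s))" by simp
  qed
  also have "\<dots> = (\<Sum>t<L. \<Sum>s<L. complex_of_real ((cmod (ip N (X t) (Y s)))\<^sup>2))"
  proof -
    have cn: "\<And>z. z * cnj z = complex_of_real ((cmod z)\<^sup>2)" by (rule complex_norm_square[symmetric])
    show ?thesis by (simp only: cn)
  qed
  finally show ?thesis .
qed


lemma lift_at: assumes "k < m" shows "lift n m M v (b*m+k) = (\<Sum>a<n. M $$ (b, a) * v (a*m + k))"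
  using assms by (simp add: lift_def)

lemma block_kraus:
  assumes K: "kraus_channel n As" and k: "k < m" and l: "l < m" and i: "i < n" and j: "j < n"
  shows "kraus_apply As (mat n n (\<lambda>(i,j). v (i*m+k) * cnj (v (j*m+l)))) $$ (i,j)
     = (\<Sum>t<length As. lift n m (As!t) v (i*m+k) * cnj (lift n m (As!t) v (j*m+l)))"
proof -
  let ?B = "mat n n (\<lambda>(i,j). v (i*m+k) * cnj (v (j*m+l)))"
  have A: "As!t \<in> carrier_mat n n" if "t < length As" for t using K that by (auto simp: kraus_channel_def)
  have "kraus_apply As ?B $$ (i,j) = (\<Sum>t<length As. (As!t * ?B * adj (As!t)) $$ (i,j))"
    using i j by (simp add: kraus_apply_def)
  also have "\<dots> = (\<Sum>t<length As. \<Sum>u\<in>{0::nat}. (\<Sum>b<n. As!t $$ (i,b) * v (b*m+k)) * cnj (\<Sum>c<n. As!t $$ (j,c) * v (c*m+l)))"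
    by (intro sum.cong refl conj_entry[OF A]) (use i j in auto)
  also have "\<dots> = (\<Sum>t<length As. lift n m (As!t) v (i*m+k) * cnj (lift n m (As!t) v (j*m+l)))"
    using k l by (simp add: lift_at)
  finally show ?thesis .
qed

lemma tensor_block:
  assumes p: "p < n*m" and q: "q < n*m"
  shows "mat n n (\<lambda>(i,j). mat (n*m) (n*m) (\<lambda>(i,j). v i * cnj (v j)) $$ (i*m + p mod m, j*m + q mod m))
      = mat n n (\<lambda>(i,j). v (i*m + p mod m) * cnj (v (j*m + q mod m)))"
proof -
  have m: "0 < m" using p by (cases m) auto
  show ?thesis using m by (intro eq_matI) (auto simp: idx_bound)
qed

lemma tensor_kraus_entry:
  assumes K: "kraus_channel n As" and p: "p < n*m" and q: "q < n*m"
  shows "tensor_id n m (kraus_apply As) (mat (n*m) (n*m) (\<lambda>(i,j). v i * cnj (v j))) $$ (p,q)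
     = (\<Sum>t<length As. lift n m (As!t) v p * cnj (lift n m (As!t) v q))"
proof -
  have m: "0 < m" using p by (cases m) auto
  have i: "p div m < n" using p by (simp add: less_mult_imp_div_less)
  have j: "q div m < n" using q by (simp add: less_mult_imp_div_less)
  have "tensor_id n m (kraus_apply As) (mat (n*m) (n*m) (\<lambda>(i,j). v i * cnj (v j))) $$ (p,q)
     = kraus_apply As (mat n n (\<lambda>(i,j). v (i*m + p mod m) * cnj (v (j*m + q mod m)))) $$ (p div m, q div m)"
    using p q by (simp add: tensor_id_def tensor_block)
  also have "\<dots> = (\<Sum>t<length As. lift n m (As!t) v (p div m * m + p mod m) * cnj (lift n m (As!t) v (q div m * m + q mod m)))"
    by (rule block_kraus[OF K _ _ i j]) (use m in auto)
  finally show ?thesis by simp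
qed

lemma tensor_kraus_U_entry:
  assumes K: "kraus_channel n As" and U: "U \<in> carrier_mat n n" and p: "p < n*m" and q: "q < n*m"
  shows "tensor_id n m (\<lambda>\<rho>. U * kraus_apply As \<rho> * adj U) (mat (n*m) (n*m) (\<lambda>(i,j). v i * cnj (v j))) $$ (p,q)
     = (\<Sum>t<length As. lift n m U (lift n m (As!t) v) p * cnj (lift n m U (lift n m (As!t) v) q))"
proof -
  have m: "0 < m" using p by (cases m) auto
  have i: "p div m < n" using p by (simp add: less_mult_imp_div_less)
  have j: "q div m < n" using q by (simp add: less_mult_imp_div_less)
  let ?B = "mat n n (\<lambda>(i,j). v (i*m + p mod m) * cnj (v (j*m + q mod m)))"
  have KB: "kraus_apply As ?B \<in> carrier_mat n n" by (simp add: kraus_apply_def)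
  have "tensor_id n m (\<lambda>\<rho>. U * kraus_apply As \<rho> * adj U) (mat (n*m) (n*m) (\<lambda>(i,j). v i * cnj (v j))) $$ (p,q)
     = (U * kraus_apply As ?B * adj U) $$ (p div m, q div m)"
    using p q by (simp add: tensor_id_def tensor_block)
  also have "\<dots> = (\<Sum>t<length As. (\<Sum>b<n. U $$ (p div m, b) * lift n m (As!t) v (b*m + p mod m))
          * cnj (\<Sum>c<n. U $$ (q div m, c) * lift n m (As!t) v (c*m + q mod m)))"
    by (rule conj_entry[OF U KB]) (use i j m in \<open>auto intro: block_kraus[OF K]\<close>)
  also have "\<dots> = (\<Sum>t<length As. lift n m U (lift n m (As!t) v) p * cnj (lift n m U (lift n m (As!t) v) q))"
    by (simp add: lift_def)
  finally show ?thesis .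
qed


lemma superfid_value:
  fixes v :: "complex vec"
  assumes K: "kraus_channel n As" and U: "U \<in> carrier_mat n n" and UU: "adj U * U = 1\<^sub>m n"
    and m: "0 < m"
    and vn: "(\<Sum>i<n*m. (cmod (v $ i))\<^sup>2) = 1"
    and \<xi>: "\<xi> = mat (n*m) (n*m) (\<lambda>(i,j). v $ i * cnj (v $ j))"
    and \<sigma>: "ptrace_Z n m \<xi> = \<sigma>"
  shows "superfidelity (tensor_id n m (kraus_apply As) \<xi>) (tensor_id n m (\<lambda>\<rho>. U * kraus_apply As \<rho> * adj U) \<xi>)
    = 1 + (\<Sum>i<length As. \<Sum>j<length As. (cmod (mtrace (\<sigma> * adj (As!i) * U * As!j)))\<^sup>2)
        - (\<Sum>i<length As. \<Sum>j<length As. (cmod (mtrace (\<sigma> * adj (As!i) * As!j)))\<^sup>2)"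
proof -
  define vf where "vf = (\<lambda>i. v $ i)"
  define N where "N = n*m"
  define L where "L = length As"
  define W where "W t = lift n m (As!t) vf" for t
  define W' where "W' t = lift n m U (W t)" for t
  have \<xi>': "\<xi> = mat (n*m) (n*m) (\<lambda>(i,j). vf i * cnj (vf j))" unfolding \<xi> vf_def ..
  have \<sigma>': "\<sigma> = ptrace_Z n m (mat (n*m) (n*m) (\<lambda>(i,j). vf i * cnj (vf j)))" using \<sigma> \<xi>' by simp
  have s: "\<sigma> \<in> carrier_mat n n" unfolding \<sigma>' by (simp add: ptrace_Z_def)
  have A: "As!t \<in> carrier_mat n n" if "t < L" for t using K that by (auto simp: kraus_channel_def L_def)
  have aA: "adj (As!t) \<in> carrier_mat n n" if "t < L" for t using A[OF that] by (auto simp: adj_def)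
  have aU: "adj U \<in> carrier_mat n n" using U by (auto simp: adj_def)
  let ?r1 = "tensor_id n m (kraus_apply As) \<xi>"
  let ?r2 = "tensor_id n m (\<lambda>\<rho>. U * kraus_apply As \<rho> * adj U) \<xi>"
  have r1: "?r1 \<in> carrier_mat N N" and r2: "?r2 \<in> carrier_mat N N" by (simp_all add: tensor_id_def N_def)
  have e1: "?r1 $$ (p,q) = (\<Sum>t<L. W t p * cnj (W t q))" if "p < N" "q < N" for p q
    unfolding \<xi>' W_def L_def using tensor_kraus_entry[OF K] that by (simp add: N_def)
  have e2: "?r2 $$ (p,q) = (\<Sum>t<L. W' t p * cnj (W' t q))" if "p < N" "q < N" for p q
    unfolding \<xi>' W'_def W_def L_def using tensor_kraus_U_entry[OF K U] that by (simp add: N_def)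
  have ipa: "ip N (W t) (W s) = mtrace (\<sigma> * adj (As!t) * As!s)" if t: "t < L" and s': "s < L" for t s
  proof -
    have "ip N (W t) (W s) = ip N vf (lift n m (adj (As!t)) (W s))"
      unfolding W_def N_def by (rule ip_lift_adj[OF A[OF t]])
    also have "\<dots> = ip N vf (lift n m (adj (As!t) * As!s) vf)"
      unfolding W_def N_def by (rule ip_cong) (auto intro: lift_lift[OF aA[OF t] A[OF s']])
    also have "\<dots> = mtrace (\<sigma> * (adj (As!t) * As!s))"
      unfolding N_def \<sigma>' by (rule ip_lift_trace) (use aA[OF t] A[OF s'] in auto)
    also have "\<dots> = mtrace (\<sigma> * adj (As!t) * As!s)"
      using s aA[OF t] A[OF s'] by (simp add: assoc_mult_mat[of _ n n _ n _ n])
    finally show ?thesis .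
  qed
  have ipb: "ip N (W t) (W' s) = mtrace (\<sigma> * adj (As!t) * U * As!s)" if t: "t < L" and s': "s < L" for t s
  proof -
    have "ip N (W t) (W' s) = ip N (W t) (lift n m (U * As!s) vf)"
      unfolding W'_def W_def N_def by (rule ip_cong) (auto intro: lift_lift[OF U A[OF s']])
    also have "\<dots> = ip N vf (lift n m (adj (As!t)) (lift n m (U * As!s) vf))"
      unfolding W_def N_def by (rule ip_lift_adj[OF A[OF t]])
    also have "\<dots> = ip N vf (lift n m (adj (As!t) * (U * As!s)) vf)"
      unfolding N_def by (rule ip_cong) (use U A[OF s'] in \<open>auto intro: lift_lift[OF aA[OF t]]\<close>)
    also have "\<dots> = mtrace (\<sigma> * (adj (As!t) * (U * As!s)))"
      unfolding N_def \<sigma>' by (rule ip_lift_trace) (use aA[OF t] A[OF s'] U in auto)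
    also have "\<sigma> * (adj (As!t) * (U * As!s)) = \<sigma> * adj (As!t) * U * As!s"
      using s aA[OF t] A[OF s'] U by (simp add: assoc_mult_mat[of _ n n _ n _ n])
    finally show ?thesis .
  qed
  have ipc: "ip N (W' t) (W' s) = ip N (W t) (W s)" for t s
  proof -
    have "ip N (W' t) (W' s) = ip N (W t) (lift n m (adj U) (lift n m U (W s)))"
      unfolding W'_def N_def by (rule ip_lift_adj[OF U])
    also have "\<dots> = ip N (W t) (lift n m (adj U * U) (W s))"
      unfolding N_def by (rule ip_cong) (auto intro: lift_lift[OF aU U])
    also have "\<dots> = ip N (W t) (W s)"
      unfolding N_def UU by (rule ip_cong) (auto intro: lift_one)
    finally show ?thesis .
  qed
  have t12: "Re (mtrace (?r1 * ?r2)) = (\<Sum>i<L. \<Sum>j<L. (cmod (mtrace (\<sigma> * adj (As!i) * U * As!j)))\<^sup>2)"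
  proof -
    have "mtrace (?r1 * ?r2) = (\<Sum>t<L. \<Sum>s<L. complex_of_real ((cmod (ip N (W t) (W' s)))\<^sup>2))"
      by (rule trace_rank_sums[OF r1 r2 e1 e2])
    then have "Re (mtrace (?r1 * ?r2)) = (\<Sum>t<L. \<Sum>s<L. (cmod (ip N (W t) (W' s)))\<^sup>2)"
      by (simp add: Re_sum)
    also have "\<dots> = (\<Sum>i<L. \<Sum>j<L. (cmod (mtrace (\<sigma> * adj (As!i) * U * As!j)))\<^sup>2)"
      by (intro sum.cong refl) (simp add: ipb)
    finally show ?thesis .
  qed
  have tr11: "mtrace (?r1 * ?r1) = (\<Sum>t<L. \<Sum>s<L. complex_of_real ((cmod (ip N (W t) (W s)))\<^sup>2))"
    by (rule trace_rank_sums[OF r1 r1 e1 e1])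
  have tr22: "mtrace (?r2 * ?r2) = (\<Sum>t<L. \<Sum>s<L. complex_of_real ((cmod (ip N (W' t) (W' s)))\<^sup>2))"
    by (rule trace_rank_sums[OF r2 r2 e2 e2])
  have re11: "Re (mtrace (?r1 * ?r1)) = (\<Sum>t<L. \<Sum>s<L. (cmod (ip N (W t) (W s)))\<^sup>2)"
    using tr11 by (simp add: Re_sum)
  have t11: "Re (mtrace (?r1 * ?r1)) = (\<Sum>i<L. \<Sum>j<L. (cmod (mtrace (\<sigma> * adj (As!i) * As!j)))\<^sup>2)"
    unfolding re11 by (intro sum.cong refl) (simp add: ipa)
  have t22: "Re (mtrace (?r2 * ?r2)) = Re (mtrace (?r1 * ?r1))"
    unfolding re11 using tr22 by (simp add: Re_sum ipc)
  have P1: "Re (mtrace (?r1 * ?r1)) \<le> 1"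
  proof -
    have "Re (mtrace (?r1 * ?r1)) = (\<Sum>t<L. \<Sum>s<L. (cmod (ip N (W t) (W s)))\<^sup>2)"
      by (rule re11)
    also have "\<dots> \<le> (\<Sum>t<L. \<Sum>s<L. Re (ip N (W t) (W t)) * Re (ip N (W s) (W s)))"
      by (intro sum_mono ip_CS)
    also have "\<dots> = (\<Sum>t<L. Re (ip N (W t) (W t)))\<^sup>2"
      by (simp add: power2_eq_square sum_product)
    also have "(\<Sum>t<L. Re (ip N (W t) (W t))) = Re (\<Sum>t<L. ip N (W t) (W t))"
      by (simp add: Re_sum)
    also have "(\<Sum>t<L. ip N (W t) (W t)) = ip N vf vf"
      using kraus_sum_ip[OF K, of m vf] unfolding W_def N_def L_def by simp
    also have "Re (ip N vf vf) = 1" using vn by (simp add: ip_self vf_def N_def)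
    finally show ?thesis by simp
  qed
  have "superfidelity ?r1 ?r2 = Re (mtrace (?r1 * ?r2)) + (1 - Re (mtrace (?r1 * ?r1)))"
    unfolding superfidelity_def t22 using P1 by (simp add: real_sqrt_mult[symmetric])
  then show ?thesis unfolding t12 t11 L_def by simp
qed



definition Qf :: "nat \<Rightarrow> (nat \<Rightarrow> nat \<Rightarrow> complex) \<Rightarrow> (nat \<Rightarrow> complex) \<Rightarrow> complex" where
  "Qf n S x = (\<Sum>i<n. \<Sum>j<n. cnj (x i) * S i j * x j)"

lemma Qf_Suc: "Qf (Suc n) S y = Qf n S y + (\<Sum>j<n. cnj (y n) * S n j * y j)
   + (\<Sum>i<n. cnj (y i) * S i n * y n) + cnj (y n) * S n n * y n"
  unfolding Qf_def by (simp add: sum.distrib add_ac)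

lemma Qf_cong: "(\<And>i. i < n \<Longrightarrow> x i = x' i) \<Longrightarrow> Qf n S x = Qf n S x'"
  unfolding Qf_def by auto

lemma sum_delta_r: fixes i n :: nat assumes "i < n" shows "(\<Sum>j<n. f j * (if j = i then a else 0)) = f i * (a::complex)"
proof -
  have "(\<Sum>j<n. f j * (if j = i then a else 0)) = (\<Sum>j<n. if j = i then f i * a else 0)" by (rule sum.cong) auto
  also have "\<dots> = f i * a" using assms by simp
  finally show ?thesis .
qed

lemma sum_delta_l: fixes i n :: nat assumes "i < n" shows "(\<Sum>j<n. cnj (if j = i then a else 0) * f j) = cnj a * (f i :: complex)"
proof -
  have "(\<Sum>j<n. cnj (if j = i then a else 0) * f j) = (\<Sum>j<n. if j = i then cnj a * f i else 0)" by (rule sum.cong) auto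
  also have "\<dots> = cnj a * f i" using assms by simp
  finally show ?thesis .
qed

lemma Qf_two: fixes i n :: nat assumes i: "i < n"
  shows "Qf (Suc n) S (\<lambda>k. if k = i then \<alpha> else if k = n then \<beta> else 0)
   = cnj \<alpha> * S i i * \<alpha> + cnj \<alpha> * S i n * \<beta> + cnj \<beta> * S n i * \<alpha> + cnj \<beta> * S n n * \<beta>"
proof -
  let ?y = "\<lambda>k. if k = i then \<alpha> else if k = n then \<beta> else 0"
  have "Qf n S ?y = Qf n S (\<lambda>k. if k = i then \<alpha> else 0)" by (rule Qf_cong) auto
  also have "\<dots> = cnj \<alpha> * S i i * \<alpha>"
  proof -
    have "Qf n S (\<lambda>k. if k = i then \<alpha> else 0) = (\<Sum>k<n. cnj (if k = i then \<alpha> else 0) * (S k i * \<alpha>))"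
      unfolding Qf_def using sum_delta_r[OF i, of "\<lambda>j. cnj (if _ = i then \<alpha> else 0) * S _ j"]
      by (simp add: mult.assoc)
    also have "\<dots> = cnj \<alpha> * (S i i * \<alpha>)" by (rule sum_delta_l[OF i])
    finally show ?thesis by (simp add: mult.assoc)
  qed
  finally have 1: "Qf n S ?y = cnj \<alpha> * S i i * \<alpha>" .
  have 2: "(\<Sum>j<n. cnj (?y n) * S n j * ?y j) = cnj \<beta> * S n i * \<alpha>"
  proof -
    have "(\<Sum>j<n. cnj (?y n) * S n j * ?y j) = (\<Sum>j<n. (cnj \<beta> * S n j) * (if j = i then \<alpha> else 0))"
      by (rule sum.cong) auto
    then show ?thesis using i by (simp add: sum_delta_r)
  qed
  have 3: "(\<Sum>j<n. cnj (?y j) * S j n * ?y n) = cnj \<alpha> * S i n * \<beta>"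
  proof -
    have "(\<Sum>j<n. cnj (?y j) * S j n * ?y n) = (\<Sum>j<n. cnj (if j = i then \<alpha> else 0) * (S j n * \<beta>))"
      by (rule sum.cong) (auto simp: mult.assoc)
    then show ?thesis using i by (simp add: sum_delta_l mult.assoc)
  qed
  show ?thesis unfolding Qf_Suc 1 2 3 using i by (simp add: add_ac)
qed


lemma Qf_rank1: "Qf N (\<lambda>i j. S' i j + w i * cnj (w j)) y
   = Qf N S' y + (\<Sum>i<N. cnj (y i) * w i) * (\<Sum>j<N. cnj (w j) * y j)"
proof -
  have "Qf N (\<lambda>i j. S' i j + w i * cnj (w j)) y
      = Qf N S' y + (\<Sum>i<N. \<Sum>j<N. cnj (y i) * w i * (cnj (w j) * y j))"
    unfolding Qf_def by (simp add: distrib_left distrib_right sum.distrib mult_ac)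
  also have "(\<Sum>i<N. \<Sum>j<N. cnj (y i) * w i * (cnj (w j) * y j)) = (\<Sum>i<N. cnj (y i) * w i) * (\<Sum>j<N. cnj (w j) * y j)"
    by (simp only: sum_product)
  finally show ?thesis .
qed

lemma Qf_zero: "Qf n S (\<lambda>_. 0) = 0" unfolding Qf_def by simp

lemma cholesky:
  fixes n :: nat
  shows "(\<forall>i<n. \<forall>j<n. cnj (S j i) = S i j) \<Longrightarrow> (\<forall>x. 0 \<le> Re (Qf n S x))
    \<Longrightarrow> \<exists>V. \<forall>i<n. \<forall>j<n. S i j = (\<Sum>k<n. V i k * cnj (V j k))"
proof (induct n arbitrary: S)
  case 0 show ?case by simp
next
  case (Suc n)
  note herm = Suc.prems(1) and pos = Suc.prems(2)
  define a where "a = S n n"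
  have ha: "cnj a = a" using herm by (simp add: a_def)
  have "Im a = 0" using arg_cong[OF ha, of Im] by simp
  define ar where "ar = Re a"
  have a_eq: "a = complex_of_real ar" using \<open>Im a = 0\<close> unfolding ar_def by (simp add: complex_eq_iff)
  have ar_nn: "0 \<le> ar"
  proof -
    let ?x = "\<lambda>k. if k = n then (1::complex) else 0"
    have "Qf n S ?x = Qf n S (\<lambda>_. 0)" by (rule Qf_cong) auto
    hence "Qf (Suc n) S ?x = a" unfolding Qf_Suc by (simp add: Qf_zero a_def)
    then show ?thesis using pos[rule_format, of ?x] by (simp add: ar_def)
  qed
  define w where "w i = (if ar = 0 then 0 else S i n / complex_of_real (sqrt ar))" for i
  have F2: "S i n = 0" if ar0: "ar = 0" and i: "i < n" for i
  proof (rule ccontr)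
    define c where "c = S i n"
    assume "S i n \<noteq> 0"
    hence c0: "c \<noteq> 0" by (simp add: c_def)
    define R where "R = (\<bar>Re (S i i)\<bar> + 1) / (2 * (cmod c)^2)"
    define t where "t = - (complex_of_real R * cnj c)"
    let ?y = "\<lambda>k. if k = i then 1 else if k = n then t else 0"
    have Sni: "S n i = cnj c" using herm i unfolding c_def by (metis less_SucI lessI)
    have "Qf (Suc n) S ?y = S i i + c * t + cnj t * cnj c"
      unfolding Qf_two[OF i] Sni using a_eq ar0 by (simp add: a_def c_def)
    also have "\<dots> = S i i - 2 * complex_of_real R * (c * cnj c)"
      unfolding t_def by (simp add: algebra_simps)
    also have "c * cnj c = complex_of_real ((cmod c)^2)" by (rule complex_norm_square[symmetric])
    finally have "Re (Qf (Suc n) S ?y) = Re (S i i) - 2 * R * (cmod c)^2" by simp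
    also have "2 * R * (cmod c)^2 = \<bar>Re (S i i)\<bar> + 1" using c0 unfolding R_def by simp
    finally have "Re (Qf (Suc n) S ?y) < 0" by linarith
    then show False using pos by (meson not_le)
  qed
  have wn: "w n = complex_of_real (sqrt ar)" if "ar \<noteq> 0"
  proof -
    have "sqrt ar \<noteq> 0" using that ar_nn by simp
    then have "complex_of_real ar / complex_of_real (sqrt ar) = complex_of_real (sqrt ar)"
      using ar_nn by (simp add: field_simps flip: of_real_mult)
    then show ?thesis using that a_eq by (simp add: w_def a_def)
  qed
  have C1: "S i n = w i * cnj (w n)" if "i \<le> n" for i
  proof (cases "ar = 0")
    case True
    show ?thesis
    proof (cases "i = n")
      case True then show ?thesis using \<open>ar = 0\<close> a_eq by (simp add: a_def w_def)
    next
      case False then show ?thesis using \<open>ar = 0\<close> F2 that by (simp add: w_def)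
    qed
  next
    case False
    have "sqrt ar \<noteq> 0" using False ar_nn by simp
    then show ?thesis using False wn[OF False] by (simp add: w_def)
  qed
  have C2: "S n j = w n * cnj (w j)" if "j \<le> n" for j
  proof -
    have "S n j = cnj (S j n)" using herm that by (metis le_imp_less_Suc lessI)
    also have "\<dots> = w n * cnj (w j)" using C1[OF that] by (simp add: mult.commute)
    finally show ?thesis .
  qed
  define S' where "S' i j = S i j - w i * cnj (w j)" for i j
  have SS': "S = (\<lambda>i j. S' i j + w i * cnj (w j))" unfolding S'_def by simp
  have herm': "\<forall>i<n. \<forall>j<n. cnj (S' j i) = S' i j"
    using herm by (auto simp: S'_def mult.commute)
  have pos': "\<forall>x. 0 \<le> Re (Qf n S' x)"
  proof
    fix x
    define t where "t = - (\<Sum>j<n. cnj (w j) * x j) / cnj (w n)"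
    define y where "y = x(n := t)"
    have yx: "y j = x j" if "j < n" for j using that by (simp add: y_def)
    have orth: "(\<Sum>j<Suc n. cnj (w j) * y j) = 0"
    proof (cases "ar = 0")
      case True then show ?thesis by (simp add: w_def)
    next
      case False
      have "sqrt ar \<noteq> 0" using False ar_nn by simp
      hence wn0: "cnj (w n) \<noteq> 0" using wn[OF False] by simp
      have "(\<Sum>j<Suc n. cnj (w j) * y j) = (\<Sum>j<n. cnj (w j) * x j) + cnj (w n) * t"
        by (simp add: yx y_def)
      also have "\<dots> = 0" unfolding t_def using wn0 by (simp add: field_simps)
      finally show ?thesis .
    qed
    have "Qf (Suc n) S y = Qf (Suc n) S' y"
      using Qf_rank1[of "Suc n" S' w y] orth by (simp add: SS'[symmetric])
    also have "Qf (Suc n) S' y = Qf n S' x"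
    proof -
      have z1: "S' n j = 0" if "j \<le> n" for j using C2[OF that] by (simp add: S'_def)
      have z2: "S' i n = 0" if "i \<le> n" for i using C1[OF that] by (simp add: S'_def)
      have "Qf n S' y = Qf n S' x" by (rule Qf_cong) (simp add: yx)
      then show ?thesis unfolding Qf_Suc using z1 z2 by simp
    qed
    finally show "0 \<le> Re (Qf n S' x)" using pos by metis
  qed
  obtain V' where V': "\<forall>i<n. \<forall>j<n. S' i j = (\<Sum>k<n. V' i k * cnj (V' j k))"
    using Suc.hyps[OF herm' pos'] by blast
  define V where "V i k = (if k = n then w i else if i < n then V' i k else 0)" for i k
  show ?case
  proof (intro exI allI impI)
    fix i j assume i: "i < Suc n" and j: "j < Suc n"
    have "(\<Sum>k<Suc n. V i k * cnj (V j k)) = (\<Sum>k<n. V i k * cnj (V j k)) + w i * cnj (w j)"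
      by (simp add: V_def)
    also have "\<dots> = S i j"
    proof (cases "i < n \<and> j < n")
      case True
      have "(\<Sum>k<n. V i k * cnj (V j k)) = (\<Sum>k<n. V' i k * cnj (V' j k))"
        using True by (intro sum.cong) (auto simp: V_def)
      also have "\<dots> = S' i j" using V' True by simp
      finally show ?thesis by (simp add: S'_def)
    next
      case False
      have "(\<Sum>k<n. V i k * cnj (V j k)) = 0"
        using False by (intro sum.neutral) (auto simp: V_def)
      moreover have "w i * cnj (w j) = S i j"
      proof (cases "j = n")
        case True then show ?thesis using C1[of i] i by simp
      next
        case False
        then have "i = n" "j \<le> n" using \<open>\<not> (i < n \<and> j < n)\<close> i j by auto
        then show ?thesis using C2[of j] by simp
      qed
      ultimately show ?thesis by simp
    qed
    finally show "S i j = (\<Sum>k<Suc n. V i k * cnj (V j k))" by simp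
  qed
qed


lemma purification_exists:
  assumes d: "density n \<sigma>"
  shows "\<exists>\<xi>. pure_state (n*n) \<xi> \<and> ptrace_Z n n \<xi> = \<sigma>"
proof -
  have psd: "psd n \<sigma>" and tr: "mtrace \<sigma> = 1" using d unfolding density_def by simp_all
  have hs: "hermitian n \<sigma>" using psd unfolding psd_def by simp
  have s: "\<sigma> \<in> carrier_mat n n" and h: "adj \<sigma> = \<sigma>" using hs unfolding hermitian_def by simp_all
  have ps: "0 \<le> Re (\<Sum>i<n. \<Sum>j<n. cnj (v $ i) * \<sigma> $$ (i,j) * v $ j)" if "v \<in> carrier_vec n" for v :: "complex vec"
  proof -
    have pall: "\<forall>v::complex vec. v \<in> carrier_vec n \<longrightarrow> 0 \<le> Re (\<Sum>i<n. \<Sum>j<n. cnj (v $ i) * \<sigma> $$ (i,j) * v $ j)"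
      using psd unfolding psd_def by (rule conjunct2)
    show ?thesis using pall that by blast
  qed
  have n0: "0 < n"
  proof (rule ccontr)
    assume "\<not> 0 < n" hence "n = 0" by simp
    moreover have "dim_row \<sigma> = n" using s by (rule carrier_matD)
    ultimately have "mtrace \<sigma> = 0" by (simp add: mtrace_def)
    then show False using tr by simp
  qed
  define S where "S i j = \<sigma> $$ (i,j)" for i j
  have herm: "\<forall>i<n. \<forall>j<n. cnj (S j i) = S i j"
  proof (intro allI impI)
    fix i j assume "i < n" "j < n"
    hence "adj \<sigma> $$ (i,j) = cnj (\<sigma> $$ (j,i))" using s by (simp add: adj_def)
    then show "cnj (S j i) = S i j" using h by (simp add: S_def)
  qed
  have pos: "\<forall>x. 0 \<le> Re (Qf n S x)"
  proof
    fix x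
    have "Qf n S x = (\<Sum>i<n. \<Sum>j<n. cnj (Matrix.vec n x $ i) * \<sigma> $$ (i,j) * Matrix.vec n x $ j)"
      unfolding Qf_def S_def by (intro sum.cong refl) simp
    then show "0 \<le> Re (Qf n S x)" using ps[of "Matrix.vec n x"] by simp
  qed
  obtain V where V: "\<forall>i<n. \<forall>j<n. S i j = (\<Sum>k<n. V i k * cnj (V j k))"
    using cholesky[OF herm pos] by blast
  define v where "v = vec (n*n) (\<lambda>p. V (p div n) (p mod n))"
  define \<xi> where "\<xi> = mat (n*n) (n*n) (\<lambda>(i,j). v $ i * cnj (v $ j))"
  have vi: "v $ (i*n+k) = V i k" if "i < n" "k < n" for i k
    using that by (simp add: v_def idx_bound)
  have norm: "(\<Sum>i<n*n. (cmod (v $ i))\<^sup>2) = 1"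
  proof -
    have "(\<Sum>i<n*n. (cmod (v $ i))\<^sup>2) = (\<Sum>i<n. \<Sum>k<n. (cmod (V i k))\<^sup>2)"
      by (subst sum_split_nm) (simp add: vi)
    also have "\<dots> = (\<Sum>i<n. Re (S i i))"
    proof (intro sum.cong refl)
      fix i assume "i \<in> {..<n}"
      hence "S i i = (\<Sum>k<n. V i k * cnj (V i k))" using V by simp
      also have "\<dots> = (\<Sum>k<n. complex_of_real ((cmod (V i k))\<^sup>2))"
      proof -
        have cn: "\<And>z. z * cnj z = complex_of_real ((cmod z)\<^sup>2)" by (rule complex_norm_square[symmetric])
        show ?thesis by (simp only: cn)
      qed
      finally have "S i i = (\<Sum>k<n. complex_of_real ((cmod (V i k))\<^sup>2))" .
      then show "(\<Sum>k<n. (cmod (V i k))\<^sup>2) = Re (S i i)" by (simp add: Re_sum)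
    qed
    also have "\<dots> = Re (mtrace \<sigma>)" using s by (simp add: mtrace_def S_def Re_sum)
    finally show ?thesis using tr by simp
  qed
  have vc: "v \<in> carrier_vec (n*n)" unfolding v_def by simp
  have "pure_state (n*n) \<xi>"
    unfolding pure_state_def \<xi>_def by (intro exI[of _ v] conjI vc norm refl)
  moreover have "ptrace_Z n n \<xi> = \<sigma>"
  proof (rule eq_matI)
    fix i j assume "i < dim_row \<sigma>" "j < dim_col \<sigma>"
    hence ij: "i < n" "j < n" using s by auto
    have "ptrace_Z n n \<xi> $$ (i,j) = (\<Sum>k<n. \<xi> $$ (i*n+k, j*n+k))" using ij by (simp add: ptrace_Z_def)
    also have "\<dots> = (\<Sum>k<n. V i k * cnj (V j k))"
      using ij by (intro sum.cong refl) (simp add: \<xi>_def idx_bound vi)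
    also have "\<dots> = \<sigma> $$ (i,j)" using V ij by (simp add: S_def)
    finally show "ptrace_Z n n \<xi> $$ (i,j) = \<sigma> $$ (i,j)" .
  qed (use s in \<open>auto simp: ptrace_Z_def\<close>)
  ultimately show ?thesis by blast
qed

lemma Inf_const_set:
  fixes f :: "nat \<Rightarrow> complex mat \<Rightarrow> real"
  assumes "\<forall>m \<xi>. P m \<xi> \<longrightarrow> f m \<xi> = R" and "P mm xx"
  shows "Inf {f m \<xi> | m \<xi>. P m \<xi>} = R"
proof -
  have "{f m \<xi> | m \<xi>. P m \<xi>} = {R}" using assms by blast
  then show ?thesis by simp
qed

theorem mainTheorem6:
  fixes n :: nat and \<sigma> H :: "complex mat" and As :: "complex mat list" and \<epsilon> :: real
  assumes "density n \<sigma>"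
    and "kraus_channel n As"
    and "hermitian n H"
  defines "U \<equiv> mat_exp ((- (\<i> * complex_of_real \<epsilon>)) \<cdot>\<^sub>m H)"
  shows "channel_superfidelity n (kraus_apply As) (\<lambda>\<rho>. U * kraus_apply As \<rho> * adj U) \<sigma>
    = 1 + (\<Sum>i<length As. \<Sum>j<length As. (cmod (mtrace (\<sigma> * adj (As!i) * U * As!j)))\<^sup>2)
        - (\<Sum>i<length As. \<Sum>j<length As. (cmod (mtrace (\<sigma> * adj (As!i) * As!j)))\<^sup>2)"
proof -
  note uu = unitary_U[OF assms(3), of \<epsilon>, folded U_def]
  define R where "R = 1 + (\<Sum>i<length As. \<Sum>j<length As. (cmod (mtrace (\<sigma> * adj (As!i) * U * As!j)))\<^sup>2)
        - (\<Sum>i<length As. \<Sum>j<length As. (cmod (mtrace (\<sigma> * adj (As!i) * As!j)))\<^sup>2)"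
  obtain \<xi>0 where \<xi>0: "pure_state (n*n) \<xi>0" "ptrace_Z n n \<xi>0 = \<sigma>"
    using purification_exists[OF assms(1)] by blast
  have n0: "0 < n"
  proof (rule ccontr)
    assume "\<not> 0 < n" hence "n = 0" by simp
    moreover have "psd n \<sigma>" using assms(1) unfolding density_def by (rule conjunct1)
    then have "hermitian n \<sigma>" unfolding psd_def by (rule conjunct1)
    then have "\<sigma> \<in> carrier_mat n n" unfolding hermitian_def by (rule conjunct1)
    then have "dim_row \<sigma> = n" by (rule carrier_matD)
    moreover have "mtrace \<sigma> = 1" using assms(1) unfolding density_def by (rule conjunct2)
    ultimately show False by (simp add: mtrace_def)
  qed
  have val: "superfidelity (tensor_id n m (kraus_apply As) \<xi>) (tensor_id n m (\<lambda>\<rho>. U * kraus_apply As \<rho> * adj U) \<xi>) = R"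
    if m0: "0 < m" and pst: "pure_state (n*m) \<xi>" and pt: "ptrace_Z n m \<xi> = \<sigma>" for m \<xi>
  proof -
    obtain v where v: "v \<in> carrier_vec (n*m)" "(\<Sum>i<n*m. (cmod (v $ i))\<^sup>2) = 1"
      "\<xi> = mat (n*m) (n*m) (\<lambda>(i,j). v $ i * cnj (v $ j))"
      using pst unfolding pure_state_def by blast
    show ?thesis unfolding R_def
      by (rule superfid_value[OF assms(2) uu(3) uu(1) m0 v(2) v(3) pt])
  qed
  show ?thesis
    unfolding channel_superfidelity_def R_def[symmetric]
    apply (rule Inf_const_set[where mm=n and xx=\<xi>0])
     apply (intro allI impI)
     apply (elim conjE)
     apply (rule val; assumption)
    apply (intro conjI n0 \<xi>0)
    done
qed

end
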